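(* Let $T$ be a tiling and let $I=\{a,a+1,\dots,b\}$ with $2\le a\le b\le n-1$ be an interval contained in the basis $B(T)$. Then every triple $ijk\in\Lambda$ with $a-1\le i<j<k\le b+1$ belongs to $T$; i.e. $T(ext(I))\subseteq T$, where $ext(I)=\{a-1,\dots,b+1\}$ and $T(ext(I))$ is the set of all triples contained in $ext(I)$.
   Context: Fix an integer $n\ge 3$ and write $[n]=\{1,\dots,n\}$. Let $\Lambda$ be the set of 3-element subsets of $[n]$; a triple $\{i,j,k\}$ with $i<j<k$ is written $ijk$. For a 4-element subset $F=\{i<j<k<l\}$ of $[n]$, the stick of $F$ is the sequence $(ijk,\ ijl,\ ikl,\ jkl)$. A tiling (the inversion set of a rhombus tiling of the zonogon $Z(n;2)$) is a subset $T\subseteq\Lambda$ such that for every 4-element $F\subseteq[n]$, $T\cap\mathrm{stick}(F)$ is an initial segment or a final segment of the stick (empty set and whole stick allowed). The basis of a tiling $T$ is $B(T)=\{j\in\{2,\dots,n-1\}: (j-1)\,j\,(j+1)\in T\}$. *)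

theory Defs
  imports Main
begin

definition Lambda :: "nat \<Rightarrow> (nat \<times> nat \<times> nat) set" where
  "Lambda n = {(i,j,k). 1 \<le> i \<and> i < j \<and> j < k \<and> k \<le> n}"

definition stick :: "nat \<Rightarrow> nat \<Rightarrow> nat \<Rightarrow> nat \<Rightarrow> (nat \<times> nat \<times> nat) list" where
  "stick i j k l = [(i,j,k), (i,j,l), (i,k,l), (j,k,l)]"

definition init_or_final :: "(nat \<times> nat \<times> nat) set \<Rightarrow> (nat \<times> nat \<times> nat) list \<Rightarrow> bool" where
  "init_or_final T s \<longleftrightarrow>
     (\<exists>m \<le> length s. T \<inter> set s = set (take m s) \<or> T \<inter> set s = set (drop m s))"

definition tiling :: "nat \<Rightarrow> (nat \<times> nat \<times> nat) set \<Rightarrow> bool" where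
  "tiling n T \<longleftrightarrow> T \<subseteq> Lambda n \<and>
     (\<forall>i j k l. 1 \<le> i \<and> i < j \<and> j < k \<and> k < l \<and> l \<le> n \<longrightarrow> init_or_final T (stick i j k l))"

definition basis :: "nat \<Rightarrow> (nat \<times> nat \<times> nat) set \<Rightarrow> nat set" where
  "basis n T = {j. 2 \<le> j \<and> j \<le> n - 1 \<and> (j - 1, j, j + 1) \<in> T}"

end

theory Submission
  imports Defs
begin

lemma stick_mid:
  assumes "init_or_final T [x1,x2,x3,x4]" "distinct [x1,x2,x3,x4]" "x1 \<in> T" "x4 \<in> T"
  shows "x2 \<in> T \<and> x3 \<in> T"
proof -
  obtain m where m0: "m \<le> length [x1,x2,x3,x4]" and h: "T \<inter> set [x1,x2,x3,x4] = set (take m [x1,x2,x3,x4])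
     \<or> T \<inter> set [x1,x2,x3,x4] = set (drop m [x1,x2,x3,x4])"
    using assms(1) unfolding init_or_final_def by blast
  have m: "m \<le> 4" using m0 by simp
  have "m = 0 \<or> m = 1 \<or> m = 2 \<or> m = 3 \<or> m = 4" using m by auto
  define S where "S = T \<inter> set [x1,x2,x3,x4]"
  have hS: "S = set (take m [x1,x2,x3,x4]) \<or> S = set (drop m [x1,x2,x3,x4])" using h S_def by simp
  have i1: "x1 \<in> S" and i4: "x4 \<in> S" using assms(3,4) S_def by auto
  have "x2 \<in> S \<and> x3 \<in> S"
    using hS i1 i4 assms(2) \<open>m = 0 \<or> _\<close>
    apply (elim disjE)
    apply (simp_all only: take_Cons' drop_Cons' take_0 drop_0 numeral_eq_Suc)
    apply auto
    done
  then show ?thesis using S_def by simp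
qed

theorem lemma5:
  fixes n a b :: nat and T :: "(nat \<times> nat \<times> nat) set"
  assumes "n \<ge> 3"
    and "tiling n T"
    and "2 \<le> a" and "a \<le> b" and "b \<le> n - 1"
    and "{a..b} \<subseteq> basis n T"
  shows "\<forall>i j k. a - 1 \<le> i \<and> i < j \<and> j < k \<and> k \<le> b + 1 \<longrightarrow> (i, j, k) \<in> T"
proof -
  have st: "init_or_final T (stick i j k l)" if "a - 1 \<le> i" "i < j" "j < k" "k < l" "l \<le> b + 1"
    for i j k l
  proof -
    have "1 \<le> i" "l \<le> n" using assms(3,5) that by auto
    then show ?thesis using assms(2) that unfolding tiling_def by blast
  qed
  have main: "\<And>i j k. k - i = d \<Longrightarrow> a - 1 \<le> i \<Longrightarrow> i < j \<Longrightarrow> j < k \<Longrightarrow> k \<le> b + 1 \<Longrightarrow> (i, j, k) \<in> T" for d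
  proof (induction d rule: less_induct)
    case (less d i j k)
    have IH: "\<And>i j k. k - i < d \<Longrightarrow> a-1 \<le> i \<Longrightarrow> i<j \<Longrightarrow> j<k \<Longrightarrow> k \<le> b+1 \<Longrightarrow> (i,j,k) \<in> T"
      using less.IH by blast
    show ?case
    proof (cases "d = 2")
      case True
      then have "j = i + 1" "k = i + 2" using less.prems by auto
      moreover have "i + 1 \<in> basis n T" using assms(6) less.prems True \<open>k = i+2\<close> by auto
      ultimately show ?thesis unfolding basis_def by auto
    next
      case False
      then have d3: "k - i \<ge> 3" using less.prems by auto
      show ?thesis
      proof (cases "j = i + 1")
        case True
        have "init_or_final T (stick i j (k-1) k)" using st less.prems True d3 by auto
        moreover have "(i, j, k-1) \<in> T"
        proof (rule IH)
          show "k - 1 - i < d" using less.prems(1) d3 by linarith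
          show "a - 1 \<le> i" using less.prems by linarith
          show "i < j" using less.prems by linarith
          show "j < k - 1" using True d3 by linarith
          show "k - 1 \<le> b + 1" using less.prems by linarith
        qed
        moreover have "(j, k-1, k) \<in> T" using IH[of k j "k-1"] less.prems True d3 by auto
        moreover have "distinct [(i,j,k-1), (i,j,k), (i,k-1,k), (j,k-1,k)]" using True d3 by auto
        ultimately show ?thesis using stick_mid[of T "(i,j,k-1)" "(i,j,k)" "(i,k-1,k)" "(j,k-1,k)"]
          unfolding stick_def by blast
      next
        case False
        have "init_or_final T (stick i (i+1) j k)" using st less.prems False by auto
        moreover have "(i, i+1, j) \<in> T" using IH[of j i "i+1"] less.prems False by auto
        moreover have "(i+1, j, k) \<in> T" using IH[of k "i+1" j] less.prems False by auto
        moreover have "distinct [(i,i+1,j), (i,i+1,k), (i,j,k), (i+1,j,k)]" using False less.prems by auto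
        ultimately show ?thesis using stick_mid[of T "(i,i+1,j)" "(i,i+1,k)" "(i,j,k)" "(i+1,j,k)"]
          unfolding stick_def by blast
      qed
    qed
  qed
  show ?thesis using main by blast
qed

end
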